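(* Let $A$ be a finitely generated $K$-algebra and $\mathcal{F}=\{V_n\}$ a filtration of $A$ with $\mathrm{h}_{\mathrm{alg}}(A,\mathcal{F})=0$. Then: (1) for any filtration $\mathcal{G}=\{W_n\}$ of $A$ with $W_n\subseteq V_n$ for all $n$, $\mathrm{h}_{\mathrm{alg}}(A,\mathcal{G})=0$; (2) for a fixed $k$, the filtration $\mathcal{G}=\{W_n\}$ with $W_n:=V_{nk}$ satisfies $\mathrm{h}_{\mathrm{alg}}(A,\mathcal{G})=0$; (3) for any filtration $\mathcal{G}=\{W_n\}$ of $A$ such that $W_1$ is finite-dimensional and $W_k=(W_1)^k$ for every $k$, one has $\mathrm{h}_{\mathrm{alg}}(A,\mathcal{G})=0$.
   Context: A filtration of a $K$-algebra $A$ is a family $\{V_n\}_{n\ge0}$ of subspaces with $0=V_0\subseteq V_1\subseteq\cdots$, $A=\bigcup_nV_n$ and $V_nV_m\subseteq V_{n+m}$; the quotients $V_n/V_{n-1}$ are assumed finite-dimensional. The algebraic entropy is $\mathrm{h}_{\mathrm{alg}}(A,\mathcal{F})=0$ if $A$ is finite-dimensional and otherwise $\limsup_{n\to\infty}\frac{\log\dim(V_n/V_{n-1})}{n}$. For a subspace $W$, $W^k$ denotes the linear span of products of $k$ elements of $W$. *)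

theory Defs
  imports Complex_Main "HOL-Library.Extended_Real" "HOL-Library.Liminf_Limsup"
begin

definition K_algebra :: "('k::field \<Rightarrow> 'a::ring_1 \<Rightarrow> 'a) \<Rightarrow> bool" where
  "K_algebra scale \<longleftrightarrow> vector_space scale \<and>
     (\<forall>c x y. scale c (x * y) = scale c x * y \<and> scale c (x * y) = x * scale c y)"

definition fin_gen_algebra :: "('k::field \<Rightarrow> 'a::ring_1 \<Rightarrow> 'a) \<Rightarrow> bool" where
  "fin_gen_algebra scale \<longleftrightarrow>
     (\<exists>S. finite S \<and> module.span scale {prod_list xs | xs. set xs \<subseteq> S} = UNIV)"

definition fin_dim :: "('k::field \<Rightarrow> 'a::ring_1 \<Rightarrow> 'a) \<Rightarrow> 'a set \<Rightarrow> bool" where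
  "fin_dim scale W \<longleftrightarrow> (\<exists>B. finite B \<and> module.span scale B = W)"

text \<open>A filtration \<open>{V n}\<close>: subspaces, \<open>V 0 = 0\<close>, increasing, exhaustive,
  \<open>V n V m \<subseteq> V (n+m)\<close>, and \<open>V n / V (n-1)\<close> finite-dimensional.\<close>
definition filtration :: "('k::field \<Rightarrow> 'a::ring_1 \<Rightarrow> 'a) \<Rightarrow> (nat \<Rightarrow> 'a set) \<Rightarrow> bool" where
  "filtration scale V \<longleftrightarrow>
     (\<forall>n. module.subspace scale (V n)) \<and>
     V 0 = {0} \<and>
     (\<forall>n. V n \<subseteq> V (Suc n)) \<and>
     (\<Union>n. V n) = UNIV \<and>
     (\<forall>n m. \<forall>x\<in>V n. \<forall>y\<in>V m. x * y \<in> V (n + m)) \<and>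
     (\<forall>n. \<exists>B. finite B \<and> V (Suc n) \<subseteq> module.span scale (V n \<union> B))"

text \<open>dim (V n / V (n-1)) = dim V n - dim V (n-1) (all V n are finite-dimensional).\<close>
definition quot_dim :: "('k::field \<Rightarrow> 'a::ring_1 \<Rightarrow> 'a) \<Rightarrow> (nat \<Rightarrow> 'a set) \<Rightarrow> nat \<Rightarrow> nat" where
  "quot_dim scale V n = vector_space.dim scale (V n) - vector_space.dim scale (V (n - 1))"

definition h_alg :: "('k::field \<Rightarrow> 'a::ring_1 \<Rightarrow> 'a) \<Rightarrow> (nat \<Rightarrow> 'a set) \<Rightarrow> ereal" where
  "h_alg scale V =
     (if fin_dim scale (UNIV :: 'a set) then 0
      else limsup (\<lambda>n. if quot_dim scale V n = 0 then -\<infinity>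
                        else ereal (ln (real (quot_dim scale V n)) / real n)))"

definition subspace_pow :: "('k::field \<Rightarrow> 'a::ring_1 \<Rightarrow> 'a) \<Rightarrow> 'a set \<Rightarrow> nat \<Rightarrow> 'a set" where
  "subspace_pow scale W k =
     module.span scale {prod_list xs | xs. length xs = k \<and> set xs \<subseteq> W}"

end

theory Submission
  imports Defs "HOL-Real_Asymp.Real_Asymp"
begin

definition subexp :: "(nat \<Rightarrow> real) \<Rightarrow> bool" where
  "subexp g \<longleftrightarrow> (\<forall>e>0. eventually (\<lambda>n. g n \<le> exp (e * real n)) sequentially)"

definition FF :: "(nat \<Rightarrow> nat) \<Rightarrow> nat \<Rightarrow> ereal" where
  "FF a n = (if a n = 0 then -\<infinity> else ereal (ln (real (a n)) / real n))"

lemma h_alg_eq: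
  "h_alg scale V = (if fin_dim scale UNIV then 0 else limsup (FF (quot_dim scale V)))"
  unfolding h_alg_def FF_def by simp

lemma limsup_to_subexp:
  assumes "limsup (FF a) \<le> 0"
  shows "subexp (\<lambda>n. real (a n))"
  unfolding subexp_def
proof (intro allI impI)
  fix e :: real assume e: "e > 0"
  have "limsup (FF a) < ereal e" using assms e
    by (meson ereal_less(2) le_less_trans zero_ereal_def)
  hence "eventually (\<lambda>n. FF a n < ereal e) sequentially" by (rule Limsup_lessD)
  hence "eventually (\<lambda>n. FF a n < ereal e \<and> n > 0) sequentially"
    by (rule eventually_conj[OF _ eventually_gt_at_top])
  thus "eventually (\<lambda>n. real (a n) \<le> exp (e * real n)) sequentially"
  proof (rule eventually_mono)
    fix n assume h: "FF a n < ereal e \<and> n > 0"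
    show "real (a n) \<le> exp (e * real n)"
    proof (cases "a n = 0")
      case True thus ?thesis by simp
    next
      case False
      then have "ln (real (a n)) / real n < e" using h by (simp add: FF_def)
      hence "ln (real (a n)) < e * real n" using h by (simp add: divide_less_eq mult.commute)
      hence "exp (ln (real (a n))) < exp (e * real n)" by simp
      thus ?thesis using False by simp
    qed
  qed
qed

lemma subexp_to_limsup:
  assumes "subexp (\<lambda>n. real (a n))"
  shows "limsup (FF a) \<le> 0"
proof (rule ereal_le_epsilon2)
  fix e :: real assume e: "0 < e"
  have "eventually (\<lambda>n. real (a n) \<le> exp (e * real n)) sequentially"
    using assms e unfolding subexp_def by blast
  hence "eventually (\<lambda>n. real (a n) \<le> exp (e * real n) \<and> n > 0) sequentially"
    by (rule eventually_conj[OF _ eventually_gt_at_top])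
  hence "eventually (\<lambda>n. FF a n \<le> ereal e) sequentially"
  proof (rule eventually_mono)
    fix n assume h: "real (a n) \<le> exp (e * real n) \<and> n > 0"
    show "FF a n \<le> ereal e"
    proof (cases "a n = 0")
      case True thus ?thesis by (simp add: FF_def)
    next
      case False
      have "ln (real (a n)) \<le> ln (exp (e * real n))"
        using h False by (subst ln_le_cancel_iff) auto
      hence "ln (real (a n)) \<le> e * real n" by simp
      hence "ln (real (a n)) / real n \<le> e" using h by (simp add: divide_le_eq mult.commute)
      thus ?thesis using False by (simp add: FF_def)
    qed
  qed
  hence "limsup (FF a) \<le> ereal e" by (rule Limsup_bounded)
  thus "limsup (FF a) \<le> 0 + ereal e" by simp
qed

lemma limsup_ge0:
  assumes "frequently (\<lambda>n. a n \<noteq> 0) sequentially"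
  shows "0 \<le> limsup (FF a)"
proof (rule ccontr)
  assume "\<not> 0 \<le> limsup (FF a)"
  hence "limsup (FF a) < 0" by simp
  hence "eventually (\<lambda>n. FF a n < 0) sequentially" by (rule Limsup_lessD)
  hence "eventually (\<lambda>n. a n = 0) sequentially"
  proof (rule eventually_mono)
    fix n assume h: "FF a n < 0"
    show "a n = 0"
    proof (rule ccontr)
      assume "a n \<noteq> 0"
      hence "ln (real (a n)) \<ge> 0" by simp
      hence "ln (real (a n)) / real n \<ge> 0" by simp
      moreover have "ln (real (a n)) / real n < 0" using h \<open>a n \<noteq> 0\<close> by (simp add: FF_def)
      ultimately show False by linarith
    qed
  qed
  thus False using assms by (simp add: frequently_def)
qed

lemma subexp_le:
  assumes "subexp g" "\<And>n. b n \<le> g n"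
  shows "subexp b"
  unfolding subexp_def
proof (intro allI impI)
  fix e :: real assume "e > 0"
  hence "eventually (\<lambda>n. g n \<le> exp (e * real n)) sequentially"
    using assms(1) unfolding subexp_def by blast
  thus "eventually (\<lambda>n. b n \<le> exp (e * real n)) sequentially"
    by (rule eventually_mono) (metis assms(2) order_trans)
qed

lemma subexp_mult:
  assumes "subexp g" "k \<ge> (1::nat)"
  shows "subexp (\<lambda>n. g (n * k))"
  unfolding subexp_def
proof (intro allI impI)
  fix e :: real assume e: "e > 0"
  then have "e / k > 0" using assms by simp
  then obtain N where N: "\<And>m. m \<ge> N \<Longrightarrow> g m \<le> exp (e / k * real m)"
    using assms(1) unfolding subexp_def eventually_sequentially by blast
  show "eventually (\<lambda>n. g (n * k) \<le> exp (e * real n)) sequentially"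
    unfolding eventually_sequentially
  proof (intro exI allI impI)
    fix n assume "n \<ge> N"
    hence "n * k \<ge> N" using assms(2) by (metis le_trans mult.right_neutral mult_le_mono2)
    hence "g (n * k) \<le> exp (e / k * real (n * k))" by (rule N)
    also have "e / k * real (n * k) = e * real n" using assms(2) by simp
    finally show "g (n * k) \<le> exp (e * real n)" .
  qed
qed

lemma subexp_sum:
  assumes "subexp g"
  shows "subexp (\<lambda>n. \<Sum>i\<le>n. g i)"
  unfolding subexp_def
proof (intro allI impI)
  fix e :: real assume e: "e > 0"
  then have "e / 2 > 0" by simp
  then obtain N where N: "\<And>m. m \<ge> N \<Longrightarrow> g m \<le> exp (e / 2 * real m)"
    using assms(1) unfolding subexp_def eventually_sequentially by blast
  define M where "M = (\<Sum>i<N. g i)"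
  have ev: "eventually (\<lambda>n::nat. M + (real n+1)*exp(e/2*n) \<le> exp(e*n)) at_top"
    using e by real_asymp
  have ev2: "eventually (\<lambda>n. (\<Sum>i\<le>n. g i) \<le> M + (real n+1)*exp(e/2*n)) sequentially"
    unfolding eventually_sequentially
  proof (intro exI allI impI)
    fix n assume nN: "n \<ge> N"
    have "{..n} = {..<N} \<union> {N..n}" using nN by auto
    hence "(\<Sum>i\<le>n. g i) = M + (\<Sum>i\<in>{N..n}. g i)"
      unfolding M_def by (subst sum.union_disjoint[symmetric]) auto
    also have "(\<Sum>i\<in>{N..n}. g i) \<le> (\<Sum>i\<in>{N..n}. exp (e/2 * real n))"
    proof (rule sum_mono)
      fix i assume "i \<in> {N..n}"
      hence "g i \<le> exp (e / 2 * real i)" using N by auto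
      also have "\<dots> \<le> exp (e/2 * real n)" using \<open>i \<in> {N..n}\<close> e by auto
      finally show "g i \<le> exp (e/2 * real n)" .
    qed
    also have "\<dots> = real (card {N..n}) * exp (e/2 * real n)" by simp
    also have "\<dots> \<le> (real n + 1) * exp (e/2 * real n)"
      by (intro mult_right_mono) auto
    finally show "(\<Sum>i\<le>n. g i) \<le> M + (real n+1)*exp(e/2*n)" by simp
  qed
  show "eventually (\<lambda>n. (\<Sum>i\<le>n. g i) \<le> exp (e * real n)) sequentially"
    using ev ev2 by (auto elim: eventually_elim2)
qed


context vector_space begin

lemma fd_sub:
  assumes "subspace S" "S \<subseteq> span C" "finite C"
  shows "\<exists>A. finite A \<and> span A = S"
proof -
  obtain A where A: "A \<subseteq> S" "independent A" "S \<subseteq> span A"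
    using maximal_independent_subset[of S] by blast
  have "finite A" using independent_span_bound[OF assms(3) A(2)] A(1) assms(2) by blast
  moreover have "span A = S"
    using A span_minimal[OF A(1) assms(1)] by blast
  ultimately show ?thesis by blast
qed

lemma dim_le_fd:
  assumes "S \<subseteq> T" "T \<subseteq> span C" "finite C"
  shows "dim S \<le> dim T"
proof -
  obtain B where B: "B \<subseteq> T" "independent B" "T \<subseteq> span B" "card B = dim T"
    using basis_exists[of T] by blast
  have "finite B" using independent_span_bound[OF assms(3) B(2)] B(1) assms(2) by blast
  have "dim S \<le> card B" using dim_le_card[of S B] assms(1) B(3) \<open>finite B\<close> by blast
  thus ?thesis using B(4) by simp
qed

lemma dim_eq_fd:
  assumes "subspace S" "S \<subseteq> T" "T \<subseteq> span C" "finite C" "dim T \<le> dim S"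
  shows "T = S"
proof (rule ccontr)
  assume "T \<noteq> S"
  then obtain x where x: "x \<in> T" "x \<notin> S" using assms(2) by blast
  obtain A where A: "A \<subseteq> S" "independent A" "S \<subseteq> span A" "card A = dim S"
    using basis_exists[of S] by blast
  have fA: "finite A" using independent_span_bound[OF assms(4) A(2)] A(1) assms(2,3) by blast
  have "span A \<subseteq> S" using span_minimal[OF A(1) assms(1)] .
  hence "x \<notin> span A" using x by blast
  hence ind: "independent (insert x A)" using independent_insertI A(2) by blast
  obtain B where B: "B \<subseteq> T" "independent B" "T \<subseteq> span B" "card B = dim T"
    using basis_exists[of T] by blast
  have fB: "finite B" using independent_span_bound[OF assms(4) B(2)] B(1) assms(3) by blast
  have "insert x A \<subseteq> span B" using x A(1) assms(2) B(3) by blast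
  hence "card (insert x A) \<le> card B" using independent_span_bound[OF fB ind] by blast
  moreover have "x \<notin> A" using x A(1) by blast
  hence "card (insert x A) = card A + 1" using fA by simp
  ultimately show False using A(4) B(4) assms(5) by simp
qed

end

definition chain :: "('k::field \<Rightarrow> 'a::ring_1 \<Rightarrow> 'a) \<Rightarrow> (nat \<Rightarrow> 'a set) \<Rightarrow> bool" where
  "chain scale W \<longleftrightarrow> (\<forall>n. module.subspace scale (W n)) \<and>
     (\<forall>n. \<exists>C. finite C \<and> module.span scale C = W n) \<and>
     (\<forall>n. W n \<subseteq> W (Suc n)) \<and> (\<Union>n. W n) = UNIV"

lemma chain_freq:
  fixes scale :: "'k::field \<Rightarrow> 'a::ring_1 \<Rightarrow> 'a"
  assumes vs: "vector_space scale" and ch: "chain scale W" and nfd: "\<not> fin_dim scale UNIV"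
  shows "frequently (\<lambda>n. quot_dim scale W n \<noteq> 0) sequentially"
proof (rule ccontr)
  interpret vs: vector_space scale by fact
  assume "\<not> frequently (\<lambda>n. quot_dim scale W n \<noteq> 0) sequentially"
  hence "eventually (\<lambda>n. quot_dim scale W n = 0) sequentially"
    by (simp add: not_frequently)
  then obtain N where N: "\<And>n. n \<ge> N \<Longrightarrow> quot_dim scale W n = 0"
    unfolding eventually_sequentially by blast
  have sub: "\<And>n. vs.subspace (W n)" and fd: "\<And>n. \<exists>C. finite C \<and> vs.span C = W n"
    and mono: "\<And>n. W n \<subseteq> W (Suc n)" and un: "(\<Union>n. W n) = UNIV"
    using ch unfolding chain_def by auto
  have const: "W n = W N" if "n \<ge> N" for n
    using that
  proof (induction n rule: dec_induct)
    case base thus ?case by simp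
  next
    case (step n)
    obtain C where C: "finite C" "vs.span C = W (Suc n)" using fd by blast
    have "quot_dim scale W (Suc n) = 0" using N step(1) by simp
    hence "vs.dim (W (Suc n)) \<le> vs.dim (W n)" unfolding quot_dim_def by simp
    hence "W (Suc n) = W n"
      using vs.dim_eq_fd[where C=C, OF sub[of n] mono[of n]] C by auto
    thus ?case using step by simp
  qed
  have "UNIV \<subseteq> W N"
  proof
    fix x :: 'a
    obtain m where "x \<in> W m" using un by blast
    show "x \<in> W N"
    proof (cases "m \<le> N")
      case True thus ?thesis using lift_Suc_mono_le[of W, OF mono True] \<open>x \<in> W m\<close> by blast
    next
      case False thus ?thesis using const[of m] \<open>x \<in> W m\<close> by simp
    qed
  qed
  then obtain C where "finite C" "vs.span C = UNIV" using fd[of N] by auto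
  thus False using nfd unfolding fin_dim_def by blast
qed

lemma filtration_chain:
  fixes scale :: "'k::field \<Rightarrow> 'a::ring_1 \<Rightarrow> 'a"
  assumes vs: "vector_space scale" and f: "filtration scale V"
  shows "chain scale V"
proof -
  interpret vs: vector_space scale by fact
  have sub: "\<And>n. vs.subspace (V n)" and V0: "V 0 = {0}"
    and fin: "\<And>n. \<exists>B. finite B \<and> V (Suc n) \<subseteq> vs.span (V n \<union> B)"
    using f unfolding filtration_def by auto
  have "\<exists>C. finite C \<and> vs.span C = V n" for n
  proof (induction n)
    case 0 thus ?case using V0 by (intro exI[of _ "{}"]) auto
  next
    case (Suc n)
    then obtain C where C: "finite C" "vs.span C = V n" by blast
    obtain B where B: "finite B" "V (Suc n) \<subseteq> vs.span (V n \<union> B)" using fin by blast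
    have "V n \<union> B \<subseteq> vs.span (C \<union> B)"
      using C(2) vs.span_mono[of C "C \<union> B"] vs.span_superset[of "C \<union> B"] by blast
    hence "vs.span (V n \<union> B) \<subseteq> vs.span (C \<union> B)"
      by (rule vs.span_minimal) simp
    hence "V (Suc n) \<subseteq> vs.span (C \<union> B)" using B by blast
    thus ?case using vs.fd_sub[OF sub] B(1) C(1) by blast
  qed
  thus ?thesis using f unfolding chain_def filtration_def by auto
qed


lemma main_lemma:
  fixes scale :: "'k::field \<Rightarrow> 'a::ring_1 \<Rightarrow> 'a"
  assumes vs: "vector_space scale" and fV: "filtration scale V"
    and lim: "limsup (FF (quot_dim scale V)) \<le> 0"
    and chW: "chain scale W" and k: "k \<ge> 1"
    and sub: "\<And>n. W n \<subseteq> V (n * k)"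
    and nfd: "\<not> fin_dim scale UNIV"
  shows "h_alg scale W = 0"
proof -
  interpret vs: vector_space scale by fact
  have chV: "chain scale V" by (rule filtration_chain[OF vs fV])
  have "\<forall>n. \<exists>C. finite C \<and> vs.span C = V n" using chV unfolding chain_def by blast
  then obtain CV where CV: "\<And>n. finite (CV n)" "\<And>n. vs.span (CV n) = V n" by metis
  have s1: "subexp (\<lambda>n. real (quot_dim scale V n))" by (rule limsup_to_subexp[OF lim])
  have V0: "V 0 = {0}" using fV unfolding filtration_def by blast
  have d0: "vs.dim (V 0) = 0"
    using V0 vs.dim_span[of "{}"] vs.span_empty vs.dim_eq_card_independent[OF vs.independent_empty]
    by simp
  have dsum: "real (vs.dim (V n)) \<le> (\<Sum>i\<le>n. real (quot_dim scale V i))" for n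
  proof (induction n)
    case 0 thus ?case by (simp add: d0)
  next
    case (Suc n)
    have "vs.dim (V (Suc n)) \<le> vs.dim (V n) + quot_dim scale V (Suc n)"
      unfolding quot_dim_def by simp
    hence "real (vs.dim (V (Suc n))) \<le> real (vs.dim (V n)) + real (quot_dim scale V (Suc n))"
      by linarith
    thus ?case using Suc by simp
  qed
  have s2: "subexp (\<lambda>n. real (vs.dim (V n)))"
    by (rule subexp_le[OF subexp_sum[OF s1] dsum])
  have s3: "subexp (\<lambda>n. real (vs.dim (V (n * k))))"
    using subexp_mult[OF s2 k] by simp
  have qle: "real (quot_dim scale W n) \<le> real (vs.dim (V (n * k)))" for n
  proof -
    have "quot_dim scale W n \<le> vs.dim (W n)" unfolding quot_dim_def by simp
    also have "vs.dim (W n) \<le> vs.dim (V (n * k))"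
      using vs.dim_le_fd[OF sub, of n "CV (n * k)"] CV by simp
    finally show ?thesis by simp
  qed
  have s4: "subexp (\<lambda>n. real (quot_dim scale W n))" by (rule subexp_le[OF s3 qle])
  have "limsup (FF (quot_dim scale W)) \<le> 0" by (rule subexp_to_limsup[OF s4])
  moreover have "0 \<le> limsup (FF (quot_dim scale W))"
    by (rule limsup_ge0[OF chain_freq[OF vs chW nfd]])
  ultimately show ?thesis using nfd by (simp add: h_alg_eq)
qed

lemma prod_in:
  fixes scale :: "'k::field \<Rightarrow> 'a::ring_1 \<Rightarrow> 'a"
  assumes f: "filtration scale V"
  shows "xs \<noteq> [] \<Longrightarrow> set xs \<subseteq> V m \<Longrightarrow> prod_list xs \<in> V (length xs * m)"
proof (induction xs)
  case Nil thus ?case by simp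
next
  case (Cons a xs)
  show ?case
  proof (cases "xs = []")
    case True thus ?thesis using Cons by simp
  next
    case False
    hence "prod_list xs \<in> V (length xs * m)" using Cons by simp
    moreover have "a \<in> V m" using Cons by simp
    ultimately have "a * prod_list xs \<in> V (m + length xs * m)"
      using f unfolding filtration_def by blast
    thus ?thesis by simp
  qed
qed

theorem proposition3p4:
  fixes scale :: "'k::field \<Rightarrow> 'a::ring_1 \<Rightarrow> 'a"
    and V :: "nat \<Rightarrow> 'a set"
  assumes alg: "K_algebra scale"
    and fg: "fin_gen_algebra scale"
    and filtV: "filtration scale V"
    and h0: "h_alg scale V = 0"
  shows "(\<forall>W. filtration scale W \<and> (\<forall>n. W n \<subseteq> V n) \<longrightarrow> h_alg scale W = 0)
       \<and> (\<forall>k::nat. k \<ge> 1 \<longrightarrow> h_alg scale (\<lambda>n. V (n * k)) = 0)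
       \<and> (\<forall>W. filtration scale W \<and> fin_dim scale (W 1) \<and>
              (\<forall>k\<ge>1. W k = subspace_pow scale (W 1) k) \<longrightarrow> h_alg scale W = 0)"
proof -
  have vs: "vector_space scale" using alg unfolding K_algebra_def by blast
  interpret vs: vector_space scale by fact
  show ?thesis
  proof (cases "fin_dim scale UNIV")
    case True thus ?thesis by (simp add: h_alg_def)
  next
    case nfd: False
    have lim: "limsup (FF (quot_dim scale V)) \<le> 0" using h0 nfd by (simp add: h_alg_eq)
    have chV: "chain scale V" by (rule filtration_chain[OF vs filtV])
    have subV: "\<And>n. vs.subspace (V n)" and monoV: "\<And>n. V n \<subseteq> V (Suc n)"
      and unV: "(\<Union>n. V n) = UNIV" and fdV: "\<And>n. \<exists>C. finite C \<and> vs.span C = V n"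
      using chV unfolding chain_def by auto
    have monoV': "V a \<subseteq> V b" if "a \<le> b" for a b
      using lift_Suc_mono_le[of V, OF monoV that] .
    have P1: "h_alg scale W = 0" if "filtration scale W" "\<forall>n. W n \<subseteq> V n" for W
      using main_lemma[OF vs filtV lim filtration_chain[OF vs that(1)], of 1] that(2) nfd by simp
    have P2: "h_alg scale (\<lambda>n. V (n * k)) = 0" if k: "k \<ge> 1" for k
    proof (rule main_lemma[OF vs filtV lim _ k _ nfd])
      show "chain scale (\<lambda>n. V (n * k))"
        unfolding chain_def
      proof (intro conjI allI)
        fix n
        show "vs.subspace (V (n * k))" by (rule subV)
        show "\<exists>C. finite C \<and> vs.span C = V (n * k)" by (rule fdV)
        show "V (n * k) \<subseteq> V (Suc n * k)" by (rule monoV') simp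
      next
        show "(\<Union>n. V (n * k)) = UNIV"
        proof (rule set_eqI, simp)
          fix x :: 'a
          obtain m where "x \<in> V m" using unV by blast
          moreover have "V m \<subseteq> V (m * k)" using k by (intro monoV') simp
          ultimately show "\<exists>n. x \<in> V (n * k)" by blast
        qed
      qed
    qed simp
    have P3: "h_alg scale W = 0"
      if fW: "filtration scale W" and fd1: "fin_dim scale (W 1)"
        and pw: "\<forall>k\<ge>1. W k = subspace_pow scale (W 1) k" for W
    proof -
      obtain C where C: "finite C" "vs.span C = W 1" using fd1 unfolding fin_dim_def by blast
      define f where "f c = (SOME n. c \<in> V n)" for c
      have fc: "c \<in> V (f c)" for c
        unfolding f_def by (rule someI_ex) (use unV in blast)
      define m where "m = Max (insert 1 (f ` C))"
      have m1: "m \<ge> 1" unfolding m_def using C(1) by simp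
      have "C \<subseteq> V m"
      proof
        fix c assume "c \<in> C"
        hence "f c \<le> m" unfolding m_def using C(1) by simp
        thus "c \<in> V m" using fc[of c] monoV' by blast
      qed
      hence W1: "W 1 \<subseteq> V m" using vs.span_minimal[OF _ subV] C(2) by blast
      have sub: "W n \<subseteq> V (n * m)" for n
      proof (cases "n = 0")
        case True
        have "W 0 = {0}" using fW unfolding filtration_def by blast
        thus ?thesis using True vs.subspace_0[OF subV] by simp
      next
        case False
        hence "n \<ge> 1" by simp
        hence "W n = subspace_pow scale (W 1) n" using pw by blast
        also have "\<dots> \<subseteq> V (n * m)"
          unfolding subspace_pow_def
        proof (rule vs.span_minimal[OF _ subV], safe)
          fix xs :: "'a list" assume "n = length xs" "set xs \<subseteq> W 1"
          thus "prod_list xs \<in> V (length xs * m)"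
            using prod_in[OF filtV, of xs m] W1 False by auto
        qed
        finally show ?thesis .
      qed
      show ?thesis
        by (rule main_lemma[OF vs filtV lim filtration_chain[OF vs fW] m1 sub nfd])
    qed
    show ?thesis using P1 P2 P3 by blast
  qed
qed

end
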